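(* Let $V$ be a finite set, $s,t\in V$, $d$ an $st$-separating semi-metric on $V$, and $A\subseteq V$ nonempty. Define $f_A^{\pm}:V\to\mathbb R^2$ by $f_A^{\pm}(v)=(f_A^{+}(v),f_A^{-}(v))$ where $f_A^{\sigma}(v)=\tfrac12\left[d(v,s)+\sigma\, d(v,A)\right]$ for $\sigma\in\{+1,-1\}$ and $d(v,A)=\min_{a\in A}d(v,a)$. Then for all $u,v\in V$, \[\|f_A^{\pm}(u)-f_A^{\pm}(v)\|_1\le 2\,d(u,v).\]
   Context: A semi-metric on $V$ is a symmetric map $d:V\times V\to\mathbb R_{\ge0}$ with $d(v,v)=0$ satisfying the triangle inequality; it is $st$-separating if $d(s,t)=d(s,v)+d(v,t)$ for all $v\in V$. *)

theory Defs
  imports Complex_Main "HOL-Library.Product_Plus"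
begin

definition semi_metric :: "'a set \<Rightarrow> ('a \<Rightarrow> 'a \<Rightarrow> real) \<Rightarrow> bool" where
  "semi_metric V d \<longleftrightarrow>
     (\<forall>u\<in>V. \<forall>v\<in>V. d u v \<ge> 0 \<and> d u v = d v u) \<and>
     (\<forall>v\<in>V. d v v = 0) \<and>
     (\<forall>u\<in>V. \<forall>v\<in>V. \<forall>w\<in>V. d u w \<le> d u v + d v w)"

definition st_separating :: "'a set \<Rightarrow> ('a \<Rightarrow> 'a \<Rightarrow> real) \<Rightarrow> 'a \<Rightarrow> 'a \<Rightarrow> bool" where
  "st_separating V d s t \<longleftrightarrow> semi_metric V d \<and> (\<forall>v\<in>V. d s t = d s v + d v t)"

definition dist_to_set :: "('a \<Rightarrow> 'a \<Rightarrow> real) \<Rightarrow> 'a \<Rightarrow> 'a set \<Rightarrow> real" where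
  "dist_to_set d v A = Min ((\<lambda>a. d v a) ` A)"

definition f_sigma :: "('a \<Rightarrow> 'a \<Rightarrow> real) \<Rightarrow> 'a \<Rightarrow> 'a set \<Rightarrow> real \<Rightarrow> 'a \<Rightarrow> real" where
  "f_sigma d s A \<sigma> v = (d v s + \<sigma> * dist_to_set d v A) / 2"

definition f_pm :: "('a \<Rightarrow> 'a \<Rightarrow> real) \<Rightarrow> 'a \<Rightarrow> 'a set \<Rightarrow> 'a \<Rightarrow> real \<times> real" where
  "f_pm d s A v = (f_sigma d s A 1 v, f_sigma d s A (-1) v)"

definition l1_norm2 :: "real \<times> real \<Rightarrow> real" where
  "l1_norm2 p = \<bar>fst p\<bar> + \<bar>snd p\<bar>"

end

theory Submission
  imports Defs
begin

lemma dist_lip: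
  assumes sm: "semi_metric V d" and fin: "finite A" and "A \<subseteq> V" "A \<noteq> {}"
    and u: "u \<in> V" and v: "v \<in> V"
  shows "dist_to_set d u A \<le> d u v + dist_to_set d v A"
proof -
  obtain a where a: "a \<in> A" "dist_to_set d v A = d v a"
  proof -
    have "Min ((\<lambda>a. d v a) ` A) \<in> (\<lambda>a. d v a) ` A" using fin assms(4) by (intro Min_in) auto
    then show ?thesis using that unfolding dist_to_set_def by blast
  qed
  have "dist_to_set d u A \<le> d u a"
    unfolding dist_to_set_def using fin a(1) by (intro Min_le) auto
  also have "\<dots> \<le> d u v + d v a" using sm u v a(1) assms(3) unfolding semi_metric_def by blast
  finally show ?thesis using a by simp
qed

theorem proposition2p8:
  fixes V :: "'a set" and d :: "'a \<Rightarrow> 'a \<Rightarrow> real" and s t :: 'a and A :: "'a set"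
  assumes "finite V" and "s \<in> V" and "t \<in> V"
    and "st_separating V d s t"
    and "A \<subseteq> V" and "A \<noteq> {}"
    and "u \<in> V" and "v \<in> V"
  shows "l1_norm2 (f_pm d s A u - f_pm d s A v) \<le> 2 * d u v"
proof -
  have sm: "semi_metric V d" using assms(4) unfolding st_separating_def by blast
  have fA: "finite A" using assms(1,5) finite_subset by blast
  have 1: "dist_to_set d u A \<le> d u v + dist_to_set d v A"
    using dist_lip[OF sm fA assms(5,6,7,8)] .
  have 2: "dist_to_set d v A \<le> d v u + dist_to_set d u A"
    using dist_lip[OF sm fA assms(5,6,8,7)] .
  have 3: "d u s \<le> d u v + d v s" "d v s \<le> d v u + d u s" "d v u = d u v" "d u v \<ge> 0"
    using sm assms(2,7,8) unfolding semi_metric_def by blast+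
  show ?thesis
  proof -
    define x where "x = d u s - d v s"
    define y where "y = dist_to_set d u A - dist_to_set d v A"
    have "\<bar>x\<bar> \<le> d u v" "\<bar>y\<bar> \<le> d u v" using 1 2 3 unfolding x_def y_def by auto
    then have "\<bar>(x + y)/2\<bar> + \<bar>(x - y)/2\<bar> \<le> 2 * d u v" by (auto simp: abs_if field_simps split: if_splits)
    moreover have "l1_norm2 (f_pm d s A u - f_pm d s A v) = \<bar>(x + y)/2\<bar> + \<bar>(x - y)/2\<bar>"
      proof -
      have "fst (f_pm d s A u - f_pm d s A v) = (x + y)/2" "snd (f_pm d s A u - f_pm d s A v) = (x - y)/2"
        unfolding f_pm_def f_sigma_def x_def y_def by (simp_all add: algebra_simps diff_divide_distrib)
      then show ?thesis unfolding l1_norm2_def by presburger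
    qed
    ultimately show ?thesis by simp
  qed
qed

end
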